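(* Let $H\in(\tfrac12,1)$, $\beta\in(1-2H,1]$, $\tau=T/M$, $t_i=i\tau$, and fix $m\in\{1,\dots,M\}$. For $u\in[t_i,t_{i+1})$ set $\mathcal S_N(u,t_i):=E_N(t_m-u)-E_N(t_m-t_i)$. Then there is a constant $C$ independent of $N,M,m$ and $x$ such that for all $x\in V$, $$\sum_{i,j=0}^{m-1}\int_{t_j}^{t_{j+1}}\int_{t_i}^{t_{i+1}}\big\langle\mathcal S_N(u,t_i)P_Nx,\;\mathcal S_N(v,t_j)P_Nx\big\rangle\,\phi(u-v)\,\mathrm du\,\mathrm dv\le C\,\tau^{2H+\beta-1}\|A_N^{\frac{\beta-1}{2}}P_Nx\|^2 .$$
   Context: $(V,\langle\cdot,\cdot\rangle,\|\cdot\|)$ is a real separable Hilbert space; $A$ is a linear, densely defined, positive self-adjoint unbounded operator with compact inverse, orthonormal eigenbasis $(e_i)$, $Ae_i=\lambda_ie_i$, $0<\lambda_1\le\lambda_2\le\dots\to\infty$. $P_N$ is the orthogonal projection onto $\mathrm{span}\{e_1,\dots,e_N\}$, $A_N=AP_N$ (with fractional powers taken on $\mathrm{span}\{e_1,\dots,e_N\}$), $E_N(t)=e^{-tA_N}$. $\phi(y)=H(2H-1)|y|^{2H-2}$. *)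

theory Defs
  imports "HOL-Analysis.Analysis"
begin

text \<open>The eigenbasis is indexed from 0: e 0, e 1, ... with eigenvalues lam 0 \<le> lam 1 \<le> ...
  so span{e_1,...,e_N} of the paper is span{e 0,...,e (N-1)}.\<close>

definition PN :: "(nat \<Rightarrow> 'a::real_inner) \<Rightarrow> nat \<Rightarrow> 'a \<Rightarrow> 'a" where
  "PN e N x = (\<Sum>k<N. inner x (e k) *\<^sub>R e k)"

text \<open>E_N(t) = exp(-t A_N) with A_N = A P_N; it acts as identity on the orthogonal
  complement of span{e_k : k < N}.\<close>
definition EN :: "(nat \<Rightarrow> 'a::real_inner) \<Rightarrow> (nat \<Rightarrow> real) \<Rightarrow> nat \<Rightarrow> real \<Rightarrow> 'a \<Rightarrow> 'a" where
  "EN e lam N t x = x - PN e N x + (\<Sum>k<N. (exp (- t * lam k) * inner x (e k)) *\<^sub>R e k)"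

definition ANpow :: "(nat \<Rightarrow> 'a::real_inner) \<Rightarrow> (nat \<Rightarrow> real) \<Rightarrow> nat \<Rightarrow> real \<Rightarrow> 'a \<Rightarrow> 'a" where
  "ANpow e lam N s x = (\<Sum>k<N. (lam k powr s * inner x (e k)) *\<^sub>R e k)"

definition phi :: "real \<Rightarrow> real \<Rightarrow> real" where
  "phi H y = H * (2 * H - 1) * \<bar>y\<bar> powr (2 * H - 2)"

definition SN :: "(nat \<Rightarrow> 'a::real_inner) \<Rightarrow> (nat \<Rightarrow> real) \<Rightarrow> nat \<Rightarrow> real \<Rightarrow> real \<Rightarrow> real \<Rightarrow> 'a \<Rightarrow> 'a" where
  "SN e lam N tm u s x = EN e lam N (tm - u) x - EN e lam N (tm - s) x"

end

theory Submission
  imports Defs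
begin

lemma ivl_bound:
  fixes F :: "real \<Rightarrow> real" and a b :: real
  assumes "a \<le> b"
  shows "ennreal \<bar>LBINT x=a..b. F x\<bar> \<le> (\<integral>\<^sup>+x. indicator {a<..<b} x * ennreal \<bar>F x\<bar> \<partial>lborel)"
proof (cases "integrable lborel (\<lambda>x. indicator {a<..<b} x *\<^sub>R F x)")
  case True
  have "ennreal \<bar>LBINT x=a..b. F x\<bar> \<le> (\<integral>\<^sup>+x. norm (indicator {a<..<b} x *\<^sub>R F x) \<partial>lborel)"
    using integral_norm_bound_ennreal[OF True] assms
    by (simp add: interval_lebesgue_integral_def set_lebesgue_integral_def)
  also have "\<dots> = (\<integral>\<^sup>+x. indicator {a<..<b} x * ennreal \<bar>F x\<bar> \<partial>lborel)"
    by (intro nn_integral_cong) (auto split: split_indicator)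
  finally show ?thesis .
next
  case False
  then show ?thesis using assms
    by (simp add: interval_lebesgue_integral_def set_lebesgue_integral_def not_integrable_integral_eq)
qed

lemma right_int:
  fixes v r p :: real assumes "0<r" "-1<p"
  shows "((\<lambda>u. \<bar>u - v\<bar> powr p) has_integral (r powr (p+1) / (p+1))) {v..v+r}"
proof -
  define F where "F = (\<lambda>u. (u - v) powr (p+1) / (p+1))"
  have "((\<lambda>u. (u - v) powr p) has_integral (F (v+r) - F v)) {v..v+r}"
  proof (rule fundamental_theorem_of_calculus_interior)
    show "v \<le> v + r" using assms by simp
    show "continuous_on {v..v + r} F"
      unfolding F_def using assms by (intro continuous_intros continuous_on_powr') auto
    show "(F has_vector_derivative (u - v) powr p) (at u)"
      if "u \<in> {v<..<v + r}" for u
    proof -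
      have "(F has_real_derivative ((p+1) * (u - v) powr (p + 1 - 1) * 1 / (p+1))) (at u)"
        unfolding F_def using that by (auto intro!: derivative_eq_intros)
      then show ?thesis using assms by (simp add: has_real_derivative_iff_has_vector_derivative[symmetric])
    qed
  qed
  moreover have "F (v+r) - F v = r powr (p+1) / (p+1)" using assms by (simp add: F_def)
  moreover have "((\<lambda>u. \<bar>u - v\<bar> powr p) has_integral (r powr (p+1) / (p+1))) {v..v+r} \<longleftrightarrow>
      ((\<lambda>u. (u - v) powr p) has_integral (r powr (p+1) / (p+1))) {v..v+r}"
    by (intro has_integral_cong) auto
  ultimately show ?thesis by simp
qed

lemma left_int:
  fixes v r p :: real assumes "0<r" "-1<p"
  shows "((\<lambda>u. \<bar>u - v\<bar> powr p) has_integral (r powr (p+1) / (p+1))) {v-r..v}"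
proof -
  define F where "F = (\<lambda>u. - ((v - u) powr (p+1) / (p+1)))"
  have "((\<lambda>u. (v - u) powr p) has_integral (F v - F (v - r))) {v-r..v}"
  proof (rule fundamental_theorem_of_calculus_interior)
    show "v - r \<le> v" using assms by simp
    show "continuous_on {v-r..v} F"
      unfolding F_def using assms by (intro continuous_intros continuous_on_powr') auto
    show "(F has_vector_derivative (v - u) powr p) (at u)"
      if "u \<in> {v - r<..<v}" for u
    proof -
      have "(F has_real_derivative (- ((p+1) * (v - u) powr (p + 1 - 1) * (-1) / (p+1)))) (at u)"
        unfolding F_def using that by (auto intro!: derivative_eq_intros)
      then show ?thesis using assms by (simp add: has_real_derivative_iff_has_vector_derivative[symmetric])
    qed
  qed
  moreover have "F v - F (v - r) = r powr (p+1) / (p+1)" using assms by (simp add: F_def)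
  moreover have "((\<lambda>u. \<bar>u - v\<bar> powr p) has_integral (r powr (p+1) / (p+1))) {v-r..v} \<longleftrightarrow>
      ((\<lambda>u. (v - u) powr p) has_integral (r powr (p+1) / (p+1))) {v-r..v}"
    by (intro has_integral_cong) auto
  ultimately show ?thesis by simp
qed

lemma sing_int:
  fixes v r p :: real assumes "0<r" "-1<p"
  shows "(\<integral>\<^sup>+u. indicator {v-r..v+r} u * ennreal (\<bar>u - v\<bar> powr p) \<partial>lborel) \<le> ennreal (2 * (r powr (p+1) / (p+1)))"
proof -
  have "(\<integral>\<^sup>+u. indicator {v-r..v+r} u * ennreal (\<bar>u - v\<bar> powr p) \<partial>lborel)
     \<le> (\<integral>\<^sup>+u. ennreal (\<bar>u - v\<bar> powr p) * indicator {v-r..v} u + ennreal (\<bar>u - v\<bar> powr p) * indicator {v..v+r} u \<partial>lborel)"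
    by (intro nn_integral_mono) (auto split: split_indicator)
  also have "\<dots> = (\<integral>\<^sup>+u. ennreal (\<bar>u - v\<bar> powr p) * indicator {v-r..v} u \<partial>lborel) + (\<integral>\<^sup>+u. ennreal (\<bar>u - v\<bar> powr p) * indicator {v..v+r} u \<partial>lborel)"
    by (intro nn_integral_add) auto
  also have "\<dots> = ennreal (r powr (p+1) / (p+1)) + ennreal (r powr (p+1) / (p+1))"
    using nn_integral_has_integral_lebesgue'[OF _ left_int[OF assms, of v]]
      nn_integral_has_integral_lebesgue'[OF _ right_int[OF assms, of v]] by simp
  also have "\<dots> = ennreal (2 * (r powr (p+1) / (p+1)))"
    using assms by (simp add: ennreal_plus[symmetric] del: ennreal_plus)
  finally show ?thesis .
qed

lemma exp_int:
  fixes c l :: real assumes "0 \<le> c" "0 < l"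
  shows "(\<integral>\<^sup>+u. indicator {0..c} u * ennreal (exp (- (c - u) * l)) \<partial>lborel) \<le> ennreal (1 / l)"
proof -
  have "((\<lambda>u. exp (- (c - u) * l)) has_integral ((\<lambda>u. exp (- (c - u) * l) / l) c - (\<lambda>u. exp (- (c - u) * l) / l) 0)) {0..c}"
  proof (rule fundamental_theorem_of_calculus)
    show "0 \<le> c" by fact
    show "((\<lambda>u. exp (- (c - u) * l) / l) has_vector_derivative exp (- (c - u) * l)) (at u within {0..c})" for u
    proof -
      have "((\<lambda>u. exp (- (c - u) * l) / l) has_real_derivative (exp (- (c - u) * l) * (l) / l)) (at u within {0..c})"
        by (auto intro!: derivative_eq_intros)
      then show ?thesis using assms by (simp add: has_real_derivative_iff_has_vector_derivative[symmetric])
    qed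
  qed
  from nn_integral_has_integral_lebesgue'[OF _ this]
  have "(\<integral>\<^sup>+u. ennreal (exp (- (c - u) * l)) * indicator {0..c} u \<partial>lborel) = ennreal ((1 - exp (- c * l)) / l)"
    using assms by (simp add: diff_divide_distrib)
  moreover have "ennreal ((1 - exp (- c * l)) / l) \<le> ennreal (1 / l)"
    using assms by (intro ennreal_leI divide_right_mono) auto
  ultimately show ?thesis by (simp add: mult.commute)
qed

lemma per_k:
  fixes l a v p :: real assumes "0<l" "0\<le>a" "-1<p" "p\<le>0"
  shows "(\<integral>\<^sup>+u. indicator {0..a} u * ennreal (exp (-(a-u)*l) * \<bar>u-v\<bar> powr p) \<partial>lborel)
     \<le> ennreal (l powr (-(p+1)) * (2/(p+1)+1))"
proof -
  define r where "r = 1/l"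
  have r: "0 < r" using assms by (simp add: r_def)
  have pt: "indicator {0..a} u * ennreal (exp (-(a-u)*l) * \<bar>u-v\<bar> powr p)
     \<le> indicator {v-r..v+r} u * ennreal (\<bar>u-v\<bar> powr p) + ennreal (l powr (-p)) * (indicator {0..a} u * ennreal (exp (-(a-u)*l)))" for u
  proof (cases "u \<in> {0..a}")
    case False then show ?thesis by simp
  next
    case True
    then have "-(a-u)*l \<le> 0" using assms by (simp add: mult_nonpos_nonneg)
    then have E1: "exp (-(a-u)*l) \<le> 1" by simp
    show ?thesis
    proof (cases "\<bar>u - v\<bar> \<le> r")
      case True
      have "ennreal (exp (-(a-u)*l) * \<bar>u-v\<bar> powr p) \<le> ennreal (\<bar>u-v\<bar> powr p)"
        using E1 by (intro ennreal_leI) (simp add: mult_left_le_one_le)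
      with True \<open>u \<in> {0..a}\<close> show ?thesis
        by (simp add: add_increasing2 indicator_def abs_le_iff)
    next
      case False
      have "\<bar>u-v\<bar> powr p \<le> r powr p" using False r assms by (intro powr_mono2') auto
      also have "r powr p = l powr (-p)" using assms by (simp add: r_def powr_minus_divide powr_divide)
      finally have "exp (-(a-u)*l) * \<bar>u-v\<bar> powr p \<le> l powr (-p) * exp (-(a-u)*l)"
        by (simp add: mult.commute mult_left_mono)
      then have "ennreal (exp (-(a-u)*l) * \<bar>u-v\<bar> powr p) \<le> ennreal (l powr (-p)) * ennreal (exp (-(a-u)*l))"
        by (simp add: ennreal_mult'[symmetric] ennreal_leI)
      with \<open>u \<in> {0..a}\<close> show ?thesis
        by (simp add: add_increasing)
    qed
  qed
  have "(\<integral>\<^sup>+u. indicator {0..a} u * ennreal (exp (-(a-u)*l) * \<bar>u-v\<bar> powr p) \<partial>lborel)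
     \<le> (\<integral>\<^sup>+u. indicator {v-r..v+r} u * ennreal (\<bar>u-v\<bar> powr p) + ennreal (l powr (-p)) * (indicator {0..a} u * ennreal (exp (-(a-u)*l))) \<partial>lborel)"
    by (intro nn_integral_mono pt)
  also have "\<dots> = (\<integral>\<^sup>+u. indicator {v-r..v+r} u * ennreal (\<bar>u-v\<bar> powr p) \<partial>lborel) + ennreal (l powr (-p)) * (\<integral>\<^sup>+u. indicator {0..a} u * ennreal (exp (-(a-u)*l)) \<partial>lborel)"
    by (subst nn_integral_add) (auto simp: nn_integral_cmult)
  also have "\<dots> \<le> ennreal (2 * (r powr (p+1) / (p+1))) + ennreal (l powr (-p)) * ennreal (1 / l)"
    by (intro add_mono mult_left_mono sing_int exp_int r assms) auto
  also have "\<dots> = ennreal (l powr (-(p+1)) * (2/(p+1)+1))"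
  proof -
    have "r powr (p+1) = l powr (-(p+1))" unfolding powr_minus using assms by (simp add: r_def powr_divide inverse_eq_divide)
    moreover have "l powr (-p) * (1/l) = l powr (-(p+1))"
    proof -
      have h: "1/l = l powr (-1)" using assms by (simp add: powr_minus_divide)
      have "l powr (-p)*(1/l) = l powr (-p + -1)" by (simp only: powr_add h)
      then show ?thesis by (metis minus_add_distrib)
    qed
    ultimately show ?thesis using assms r
      by (simp add: ennreal_mult'[symmetric] ennreal_plus[symmetric] algebra_simps del: ennreal_plus)
  qed
  finally show ?thesis .
qed

lemma ind_sum:
  fixes \<tau> u :: real assumes "0 < \<tau>"
  shows "(\<Sum>i<m. indicator {real i * \<tau><..<real (Suc i) * \<tau>} u :: ennreal) \<le> indicator {0..real m * \<tau>} u"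
proof (cases "\<exists>i<m. u \<in> {real i * \<tau><..<real (Suc i) * \<tau>}")
  case False
  then have "(\<Sum>i<m. indicator {real i * \<tau><..<real (Suc i) * \<tau>} u :: ennreal) = 0"
    by (intro sum.neutral) auto
  then show ?thesis by simp
next
  case True
  then obtain i0 where i0: "i0 < m" "u \<in> {real i0 * \<tau><..<real (Suc i0) * \<tau>}" by blast
  have other: "u \<notin> {real i * \<tau><..<real (Suc i) * \<tau>}" if "i \<noteq> i0" for i
  proof
    assume u: "u \<in> {real i * \<tau><..<real (Suc i) * \<tau>}"
    show False
    proof (cases "i < i0")
      case True
      then have "real (Suc i) * \<tau> \<le> real i0 * \<tau>" using assms by (intro mult_right_mono) auto
      with u i0 show False by auto
    next
      case False
      with that have "real (Suc i0) * \<tau> \<le> real i * \<tau>" using assms by (intro mult_right_mono) auto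
      with u i0 show False by auto
    qed
  qed
  have "(\<Sum>i<m. indicator {real i * \<tau><..<real (Suc i) * \<tau>} u :: ennreal) = (\<Sum>i<m. if i = i0 then 1 else 0)"
    using other i0 by (intro sum.cong) (auto simp: indicator_def)
  also have "\<dots> = 1" using i0 by simp
  also have "u \<in> {0..real m * \<tau>}"
  proof -
    have "real (Suc i0) * \<tau> \<le> real m * \<tau>" using assms i0 by (intro mult_right_mono) auto
    moreover have "0 \<le> real i0 * \<tau>" using assms by simp
    ultimately show ?thesis using i0 by auto
  qed
  then have "1 = (indicator {0..real m * \<tau>} u :: ennreal)" by simp
  finally show ?thesis by simp
qed

lemma final_real:
  fixes l \<tau> H \<beta> :: real assumes "0<l" "0<\<tau>" "1/2<H" "H<1" "1-2*H<\<beta>" "\<beta>\<le>1"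
  shows "(min 1 (l*\<tau>))\<^sup>2 * l powr (-2*H) \<le> \<tau> powr (2*H+\<beta>-1) * l powr (\<beta>-1)"
proof -
  define s where "s = l*\<tau>"
  define \<alpha> where "\<alpha> = 2*H+\<beta>-1"
  have s: "0 < s" using assms by (simp add: s_def)
  have al: "0 < \<alpha>" "\<alpha> \<le> 2" using assms by (auto simp: \<alpha>_def)
  have c: "(min 1 s)\<^sup>2 \<le> s powr \<alpha>"
  proof (cases "s \<le> 1")
    case True
    have "(min 1 s)\<^sup>2 = s powr 2" using True s by (simp add: powr_numeral)
    also have "\<dots> \<le> s powr \<alpha>" using True s al by (intro powr_mono') auto
    finally show ?thesis .
  next
    case False
    then show ?thesis using al by (simp add: ge_one_powr_ge_zero)
  qed
  have "\<tau> powr \<alpha> * l powr (\<beta>-1) = s powr \<alpha> * l powr (-2*H)"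
    using assms by (simp add: s_def powr_mult \<alpha>_def powr_add[symmetric] algebra_simps)
  with c show ?thesis
    by (simp add: \<alpha>_def s_def mult_right_mono)
qed

lemma inner_sum_orth:
  fixes e :: "nat \<Rightarrow> 'a::real_inner"
  assumes orth: "\<forall>i j. inner (e i) (e j) = (if i = j then 1 else 0)"
  shows "inner (\<Sum>k<N. a k *\<^sub>R e k) (\<Sum>k<N. b k *\<^sub>R e k) = (\<Sum>k<N. a k * b k)"
proof -
  have "inner (a k *\<^sub>R e k) (\<Sum>j<N. b j *\<^sub>R e j) = a k * b k" if "k < N" for k
  proof -
    have "inner (a k *\<^sub>R e k) (\<Sum>j<N. b j *\<^sub>R e j) = a k * (\<Sum>j<N. if k = j then b j else 0)"
      by (simp add: inner_sum_right orth sum_distrib_left if_distrib cong: if_cong)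
    also have "\<dots> = a k * b k" using that by simp
    finally show ?thesis .
  qed
  then show ?thesis unfolding inner_sum_left by (intro sum.cong) auto
qed

lemma inner_sum_e:
  fixes e :: "nat \<Rightarrow> 'a::real_inner"
  assumes orth: "\<forall>i j. inner (e i) (e j) = (if i = j then 1 else 0)" and "k < N"
  shows "inner (\<Sum>j<N. a j *\<^sub>R e j) (e k) = a k"
proof -
  have "inner (\<Sum>j<N. a j *\<^sub>R e j) (e k) = (\<Sum>j<N. if j = k then a j else 0)"
    by (simp add: inner_sum_left orth if_distrib cong: if_cong)
  also have "\<dots> = a k" using assms(2) by simp
  finally show ?thesis .
qed

lemma PN_inner:
  fixes e :: "nat \<Rightarrow> 'a::real_inner"
  assumes orth: "\<forall>i j. inner (e i) (e j) = (if i = j then 1 else 0)" and "k < N"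
  shows "inner (PN e N x) (e k) = inner x (e k)"
  unfolding PN_def using inner_sum_e[OF assms] .

lemma PN_PN:
  fixes e :: "nat \<Rightarrow> 'a::real_inner"
  assumes orth: "\<forall>i j. inner (e i) (e j) = (if i = j then 1 else 0)"
  shows "PN e N (PN e N x) = PN e N x"
proof -
  have "PN e N (PN e N x) = (\<Sum>k<N. inner (PN e N x) (e k) *\<^sub>R e k)"
    by (simp only: PN_def[of e N "PN e N x"])
  also have "\<dots> = (\<Sum>k<N. inner x (e k) *\<^sub>R e k)"
    by (rule sum.cong) (auto simp: PN_inner[OF orth])
  also have "\<dots> = PN e N x" by (simp add: PN_def)
  finally show ?thesis .
qed

lemma SN_PN:
  fixes e :: "nat \<Rightarrow> 'a::real_inner"
  assumes orth: "\<forall>i j. inner (e i) (e j) = (if i = j then 1 else 0)"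
  shows "SN e lam N tm u s (PN e N x) = (\<Sum>k<N. ((exp (-(tm-u)*lam k) - exp (-(tm-s)*lam k)) * inner x (e k)) *\<^sub>R e k)"
proof -
  have EN: "EN e lam N t (PN e N x) = (\<Sum>k<N. (exp (-t*lam k) * inner x (e k)) *\<^sub>R e k)" for t
    unfolding EN_def PN_PN[OF orth] using PN_inner[OF orth] by simp
  show ?thesis unfolding SN_def EN
    by (simp add: sum_subtractf[symmetric] algebra_simps scaleR_diff_left)
qed

lemma AN_norm:
  fixes e :: "nat \<Rightarrow> 'a::real_inner"
  assumes orth: "\<forall>i j. inner (e i) (e j) = (if i = j then 1 else 0)"
  shows "(norm (ANpow e lam N s (PN e N x)))\<^sup>2 = (\<Sum>k<N. (lam k powr s)\<^sup>2 * (inner x (e k))\<^sup>2)"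
proof -
  have "ANpow e lam N s (PN e N x) = (\<Sum>k<N. (lam k powr s * inner x (e k)) *\<^sub>R e k)"
    unfolding ANpow_def using PN_inner[OF orth] by simp
  then show ?thesis
    unfolding power2_norm_eq_inner by (simp add: inner_sum_orth[OF orth] power2_eq_square algebra_simps)
qed

lemma key_f:
  fixes l a s u \<tau> :: real
  assumes "0 \<le> l" "s \<le> u" "u \<le> s + \<tau>"
  shows "0 \<le> exp(-(a-u)*l) - exp(-(a-s)*l)"
    and "exp(-(a-u)*l) - exp(-(a-s)*l) \<le> min 1 (l*\<tau>) * exp(-(a-u)*l)"
proof -
  define q where "q = exp (-(u-s)*l)"
  have split: "exp(-(a-s)*l) = exp(-(a-u)*l) * q"
    unfolding q_def by (simp add: exp_add[symmetric] algebra_simps)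
  have q1: "q \<le> 1" using assms by (simp add: q_def mult_nonpos_nonneg)
  have q2: "1 - q \<le> l*\<tau>"
  proof -
    have "1 + (-(u-s)*l) \<le> q" unfolding q_def by (rule exp_ge_add_one_self)
    moreover have "(u-s)*l \<le> \<tau>*l" using assms by (intro mult_right_mono) auto
    ultimately show ?thesis by (simp add: algebra_simps)
  qed
  have q0: "0 < q" by (simp add: q_def)
  have "exp(-(a-u)*l) - exp(-(a-s)*l) = (1 - q) * exp(-(a-u)*l)" using split by (simp add: algebra_simps)
  then show "0 \<le> exp(-(a-u)*l) - exp(-(a-s)*l)" and "exp(-(a-u)*l) - exp(-(a-s)*l) \<le> min 1 (l*\<tau>) * exp(-(a-u)*l)"
    using q1 q2 q0 by (auto intro!: mult_right_mono)
qed


theorem mainTheorem10: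
  fixes e :: "nat \<Rightarrow> 'a::{real_inner,complete_space}" and lam :: "nat \<Rightarrow> real"
    and H \<beta> T :: real
  assumes orth: "\<forall>i j. inner (e i) (e j) = (if i = j then 1 else 0)"
    and complete: "closure (span (range e)) = UNIV"
    and lam_pos: "\<forall>i. 0 < lam i"
    and lam_mono: "mono lam"
    and lam_inf: "filterlim lam at_top sequentially"
    and H: "1/2 < H" "H < 1"
    and beta: "1 - 2 * H < \<beta>" "\<beta> \<le> 1"
    and T: "0 < T"
  shows "\<exists>C. \<forall>N M m x. 0 < M \<longrightarrow> 1 \<le> m \<longrightarrow> m \<le> M \<longrightarrow>
     (let \<tau> = T / real M; t = (\<lambda>i::nat. real i * \<tau>) in
       (\<Sum>i<m. \<Sum>j<m.
          (LBINT v=t j..t (Suc j). (LBINT u=t i..t (Suc i).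
            inner (SN e lam N (t m) u (t i) (PN e N x)) (SN e lam N (t m) v (t j) (PN e N x))
              * phi H (u - v))))
       \<le> C * \<tau> powr (2 * H + \<beta> - 1) * (norm (ANpow e lam N ((\<beta> - 1) / 2) (PN e N x)))\<^sup>2)"
proof -
  define p where "p = 2*H - 2"
  define Hc where "Hc = H*(2*H-1)"
  define K where "K = 2/(2*H-1) + 1"
  have p: "-1 < p" "p \<le> 0" "p + 1 = 2*H-1" using H by (auto simp: p_def)
  have Hc: "0 \<le> Hc" using H by (simp add: Hc_def)
  have K: "0 \<le> K" using H by (simp add: K_def)
  have phi_eq: "phi H y = Hc * \<bar>y\<bar> powr p" for y by (simp add: phi_def Hc_def p_def)
  show ?thesis
  proof (intro exI[of _ "Hc*K"] allI impI)
    fix N M m :: nat and x :: 'a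
    assume M: "0 < M" "1 \<le> m" "m \<le> M"
    define \<tau> where "\<tau> = T / real M"
    define t where "t = (\<lambda>i::nat. real i * \<tau>)"
    define y where "y = PN e N x"
    define w where "w k = (inner x (e k))\<^sup>2" for k
    define c where "c k = (min 1 (lam k * \<tau>))\<^sup>2" for k
    define E where "E k u = exp (- (t m - u) * lam k)" for k u
    define G where "G u v = (\<Sum>k<N. (w k * c k * Hc * E k v) * (E k u * \<bar>u - v\<bar> powr p))" for u v
    define g where "g i j u v = inner (SN e lam N (t m) u (t i) y) (SN e lam N (t m) v (t j) y) * phi H (u - v)" for i j u v
    define T' where "T' i j = (LBINT v=t j..t (Suc j). (LBINT u=t i..t (Suc i). g i j u v))" for i j
    define J where "J i = {t i<..<t (Suc i)}" for i
    define \<Phi> where "\<Phi> i v = (\<integral>\<^sup>+u. indicator (J i) u * ennreal (G u v) \<partial>lborel)" for i v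
    define \<Psi> where "\<Psi> v = (\<Sum>k<N. ennreal (w k * c k * Hc * E k v * (lam k powr (-(p+1)) * K)))" for v
    have tau: "0 < \<tau>" using M T by (simp add: \<tau>_def)
    have tSuc: "t (Suc i) = t i + \<tau>" for i by (simp add: t_def algebra_simps)
    have t0: "0 \<le> t i" for i using tau by (simp add: t_def)
    have w0: "0 \<le> w k" for k by (simp add: w_def)
    have c0: "0 \<le> c k" for k by (simp add: c_def)
    have E0: "0 \<le> E k u" for k u by (simp add: E_def)
    have G0: "0 \<le> G u v" for u v
      unfolding G_def by (intro sum_nonneg mult_nonneg_nonneg w0 c0 Hc E0 powr_ge_zero)
    have g_eq: "g i j u v = (\<Sum>k<N. (E k u - E k (t i)) * (E k v - E k (t j)) * w k) * (Hc * \<bar>u - v\<bar> powr p)" for i j u v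
      unfolding g_def y_def SN_PN[OF orth] inner_sum_orth[OF orth] phi_eq
      by (simp add: E_def w_def power2_eq_square algebra_simps)
    have ptwise: "\<bar>g i j u v\<bar> \<le> G u v"
      if "t i \<le> u" "u \<le> t i + \<tau>" "t j \<le> v" "v \<le> t j + \<tau>" for i j u v
    proof -
      have trm: "\<bar>(E k u - E k (t i)) * (E k v - E k (t j)) * w k\<bar> \<le> w k * c k * E k v * E k u" for k
      proof -
        have l0: "0 \<le> lam k" using lam_pos by (simp add: less_imp_le)
        note a = key_f[OF l0 that(1,2), of "t m"] and b = key_f[OF l0 that(3,4), of "t m"]
        have "\<bar>(E k u - E k (t i)) * (E k v - E k (t j)) * w k\<bar> = (E k u - E k (t i)) * (E k v - E k (t j)) * w k"
          using a(1) b(1) w0 by (simp add: E_def abs_mult)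
        also have "\<dots> \<le> (min 1 (lam k*\<tau>) * E k u) * (min 1 (lam k*\<tau>) * E k v) * w k"
          using a b w0 order.trans[OF a(1) a(2)] by (intro mult_right_mono mult_mono) (auto simp: E_def)
        also have "\<dots> = w k * c k * E k v * E k u" by (simp add: c_def power2_eq_square)
        finally show ?thesis .
      qed
      have "\<bar>g i j u v\<bar> = \<bar>\<Sum>k<N. (E k u - E k (t i)) * (E k v - E k (t j)) * w k\<bar> * (Hc * \<bar>u - v\<bar> powr p)"
        unfolding g_eq using Hc by (simp add: abs_mult)
      also have "\<dots> \<le> (\<Sum>k<N. w k * c k * E k v * E k u) * (Hc * \<bar>u - v\<bar> powr p)"
        using Hc by (intro mult_right_mono order.trans[OF sum_abs] sum_mono trm) auto
      also have "\<dots> = G u v" unfolding G_def sum_distrib_right by (intro sum.cong) (simp_all add: mult_ac)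
      finally show ?thesis .
    qed
    have ind: "(\<Sum>j<m. indicator (J j) u :: ennreal) \<le> indicator {0..t m} u" for u
      unfolding J_def t_def using ind_sum[OF tau, where m=m and u=u] by simp
    have pk: "(\<integral>\<^sup>+u. indicator {0..t m} u * ennreal (E k u * \<bar>u - v\<bar> powr p) \<partial>lborel) \<le> ennreal (lam k powr (-(p+1)) * K)" for k v
      using per_k[OF _ _ p(1) p(2), of "lam k" "t m" v] lam_pos t0[of m]
      unfolding E_def K_def p(3)[symmetric] by simp
    have ek: "(\<integral>\<^sup>+u. indicator {0..t m} u * ennreal (E k u) \<partial>lborel) \<le> ennreal (1 / lam k)" for k
      using exp_int[of "t m" "lam k"] lam_pos t0[of m] unfolding E_def by simp
    have Psi_bound: "(\<integral>\<^sup>+u. indicator {0..t m} u * ennreal (G u v) \<partial>lborel) \<le> \<Psi> v" for v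
    proof -
      have "(\<integral>\<^sup>+u. indicator {0..t m} u * ennreal (G u v) \<partial>lborel)
         = (\<integral>\<^sup>+u. (\<Sum>k<N. ennreal (w k * c k * Hc * E k v) * (indicator {0..t m} u * ennreal (E k u * \<bar>u - v\<bar> powr p))) \<partial>lborel)"
      proof (intro nn_integral_cong)
        fix u
        have "ennreal (G u v) = (\<Sum>k<N. ennreal (w k * c k * Hc * E k v) * ennreal (E k u * \<bar>u - v\<bar> powr p))"
          unfolding G_def
          by (subst sum_ennreal[symmetric]) (auto intro!: sum.cong mult_nonneg_nonneg w0 c0 Hc E0 simp: ennreal_mult' w0 c0 Hc E0)
        then show "indicator {0..t m} u * ennreal (G u v) = (\<Sum>k<N. ennreal (w k * c k * Hc * E k v) * (indicator {0..t m} u * ennreal (E k u * \<bar>u - v\<bar> powr p)))"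
          by (simp add: sum_distrib_left mult_ac)
      qed
      also have "\<dots> = (\<Sum>k<N. (\<integral>\<^sup>+u. ennreal (w k * c k * Hc * E k v) * (indicator {0..t m} u * ennreal (E k u * \<bar>u - v\<bar> powr p)) \<partial>lborel))"
        by (rule nn_integral_sum) (unfold E_def, measurable)
      also have "\<dots> = (\<Sum>k<N. ennreal (w k * c k * Hc * E k v) * (\<integral>\<^sup>+u. indicator {0..t m} u * ennreal (E k u * \<bar>u - v\<bar> powr p) \<partial>lborel))"
        by (intro sum.cong refl nn_integral_cmult) (unfold E_def, measurable)
      also have "\<dots> \<le> (\<Sum>k<N. ennreal (w k * c k * Hc * E k v) * ennreal (lam k powr (-(p+1)) * K))"
        by (intro sum_mono mult_left_mono pk) auto
      also have "\<dots> = \<Psi> v" unfolding \<Psi>_def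
        by (intro sum.cong refl, subst ennreal_mult[symmetric]) (auto intro!: mult_nonneg_nonneg w0 c0 Hc E0 K)
      finally show ?thesis .
    qed
    have meas: "(\<lambda>v. indicator (J j) v * \<Phi> i v) \<in> borel_measurable lborel" for i j
      unfolding \<Phi>_def J_def G_def E_def by measurable
    have inner_b: "ennreal \<bar>LBINT u=t i..t (Suc i). g i j u v\<bar> \<le> \<Phi> i v" if "v \<in> {t j<..<t (Suc j)}" for i j v
    proof -
      have "ennreal \<bar>LBINT u=t i..t (Suc i). g i j u v\<bar> \<le> (\<integral>\<^sup>+u. indicator {t i<..<t (Suc i)} u * ennreal \<bar>g i j u v\<bar> \<partial>lborel)"
        by (rule ivl_bound) (simp add: tSuc tau less_imp_le)
      also have "\<dots> \<le> \<Phi> i v" unfolding \<Phi>_def J_def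
        using that by (intro nn_integral_mono) (auto simp: tSuc split: split_indicator intro!: ennreal_leI ptwise)
      finally show ?thesis .
    qed
    have Tb: "ennreal \<bar>T' i j\<bar> \<le> (\<integral>\<^sup>+v. indicator (J j) v * \<Phi> i v \<partial>lborel)" for i j
    proof -
      have "ennreal \<bar>T' i j\<bar> \<le> (\<integral>\<^sup>+v. indicator {t j<..<t (Suc j)} v * ennreal \<bar>LBINT u=t i..t (Suc i). g i j u v\<bar> \<partial>lborel)"
        unfolding T'_def by (rule ivl_bound) (simp add: tSuc tau less_imp_le)
      also have "\<dots> \<le> (\<integral>\<^sup>+v. indicator (J j) v * \<Phi> i v \<partial>lborel)"
        unfolding J_def by (intro nn_integral_mono) (auto split: split_indicator intro: inner_b)
      finally show ?thesis .
    qed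
    define R where "R = Hc * K * \<tau> powr (2*H+\<beta>-1) * (\<Sum>k<N. lam k powr (\<beta>-1) * w k)"
    have R0: "0 \<le> R" unfolding R_def
      by (intro mult_nonneg_nonneg Hc K sum_nonneg w0) auto
    have "ennreal (\<Sum>i<m. \<Sum>j<m. \<bar>T' i j\<bar>) = (\<Sum>i<m. \<Sum>j<m. ennreal \<bar>T' i j\<bar>)"
      by (simp add: sum_nonneg)
    also have "\<dots> \<le> (\<Sum>i<m. \<Sum>j<m. \<integral>\<^sup>+v. indicator (J j) v * \<Phi> i v \<partial>lborel)"
      by (intro sum_mono Tb)
    also have "\<dots> = (\<integral>\<^sup>+v. (\<Sum>i<m. \<Sum>j<m. indicator (J j) v * \<Phi> i v) \<partial>lborel)"
    proof -
      have "(\<Sum>i<m. \<Sum>j<m. \<integral>\<^sup>+v. indicator (J j) v * \<Phi> i v \<partial>lborel) = (\<Sum>i<m. \<integral>\<^sup>+v. (\<Sum>j<m. indicator (J j) v * \<Phi> i v) \<partial>lborel)"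
        by (intro sum.cong refl nn_integral_sum[symmetric] meas)
      also have "\<dots> = (\<integral>\<^sup>+v. (\<Sum>i<m. \<Sum>j<m. indicator (J j) v * \<Phi> i v) \<partial>lborel)"
        by (intro nn_integral_sum[symmetric] borel_measurable_sum meas)
      finally show ?thesis .
    qed
    also have "\<dots> \<le> (\<integral>\<^sup>+v. indicator {0..t m} v * \<Psi> v \<partial>lborel)"
    proof (intro nn_integral_mono)
      fix v :: real
      have eq: "(\<Sum>i<m. \<Sum>j<m. indicator (J j) v * \<Phi> i v) = (\<Sum>j<m. indicator (J j) v) * (\<Sum>i<m. \<Phi> i v)"
        unfolding sum_product by (rule sum.swap)
      show "(\<Sum>i<m. \<Sum>j<m. indicator (J j) v * \<Phi> i v) \<le> indicator {0..t m} v * \<Psi> v"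
      proof (cases "v \<in> {0..t m}")
        case False
        with ind[of v] have "(\<Sum>j<m. indicator (J j) v :: ennreal) = 0" by simp
        then show ?thesis unfolding eq by simp
      next
        case True
        have "(\<Sum>i<m. \<Phi> i v) = (\<integral>\<^sup>+u. (\<Sum>i<m. indicator (J i) u) * ennreal (G u v) \<partial>lborel)"
          unfolding \<Phi>_def sum_distrib_right
          by (rule nn_integral_sum[symmetric]) (unfold J_def G_def E_def, measurable)
        also have "\<dots> \<le> (\<integral>\<^sup>+u. indicator {0..t m} u * ennreal (G u v) \<partial>lborel)"
          by (intro nn_integral_mono mult_right_mono ind) auto
        also have "\<dots> \<le> \<Psi> v" by (rule Psi_bound)
        finally have "(\<Sum>i<m. \<Phi> i v) \<le> \<Psi> v" .
        then show ?thesis unfolding eq using ind[of v] True by (intro mult_mono) auto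
      qed
    qed
    also have "\<dots> = (\<integral>\<^sup>+v. (\<Sum>k<N. ennreal (w k * c k * Hc * (lam k powr (-(p+1)) * K)) * (indicator {0..t m} v * ennreal (E k v))) \<partial>lborel)"
    proof (intro nn_integral_cong)
      fix v
      show "indicator {0..t m} v * \<Psi> v = (\<Sum>k<N. ennreal (w k * c k * Hc * (lam k powr (-(p+1)) * K)) * (indicator {0..t m} v * ennreal (E k v)))"
        unfolding \<Psi>_def sum_distrib_left
      proof (intro sum.cong refl)
        fix k
        have "ennreal (w k * c k * Hc * (lam k powr - (p + 1) * K)) * ennreal (E k v) = ennreal (w k * c k * Hc * E k v * (lam k powr - (p + 1) * K))"
          by (subst ennreal_mult[symmetric]) (auto intro!: mult_nonneg_nonneg w0 c0 Hc E0 K simp: mult_ac)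
        then show "indicator {0..t m} v * ennreal (w k * c k * Hc * E k v * (lam k powr - (p + 1) * K)) = ennreal (w k * c k * Hc * (lam k powr - (p + 1) * K)) * (indicator {0..t m} v * ennreal (E k v))"
          by (metis (no_types, lifting) mult.assoc mult.commute)
      qed
    qed
    also have "\<dots> = (\<Sum>k<N. (\<integral>\<^sup>+v. ennreal (w k * c k * Hc * (lam k powr (-(p+1)) * K)) * (indicator {0..t m} v * ennreal (E k v)) \<partial>lborel))"
      by (rule nn_integral_sum) (unfold E_def, measurable)
    also have "\<dots> = (\<Sum>k<N. ennreal (w k * c k * Hc * (lam k powr (-(p+1)) * K)) * (\<integral>\<^sup>+v. indicator {0..t m} v * ennreal (E k v) \<partial>lborel))"
      by (intro sum.cong refl nn_integral_cmult) (unfold E_def, measurable)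
    also have "\<dots> \<le> (\<Sum>k<N. ennreal (w k * c k * Hc * (lam k powr (-(p+1)) * K)) * ennreal (1 / lam k))"
      by (intro sum_mono mult_left_mono ek) auto
    also have "\<dots> \<le> ennreal R"
    proof -
      have pw: "lam k powr (-(p+1)) * (1/lam k) = lam k powr (-2*H)" for k
      proof -
        have h: "1/lam k = lam k powr (-1)" using lam_pos[rule_format, of k] by (simp add: powr_minus_divide)
        have "lam k powr (-(p+1)) * (1/lam k) = lam k powr (-(p+1) + -1)" by (simp only: powr_add h)
        also have "-(p+1) + -1 = -2*H" by (simp add: p_def)
        finally show ?thesis .
      qed
      have "(\<Sum>k<N. ennreal (w k * c k * Hc * (lam k powr (-(p+1)) * K)) * ennreal (1 / lam k))
          = ennreal (\<Sum>k<N. Hc * K * w k * (c k * lam k powr (-2*H)))"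
      proof -
        have tk: "ennreal (w k * c k * Hc * (lam k powr (-(p+1)) * K)) * ennreal (1 / lam k) = ennreal (Hc * K * w k * (c k * lam k powr (-2*H)))" for k
        proof -
          have lk: "0 < lam k" using lam_pos by simp
          have "ennreal (w k * c k * Hc * (lam k powr (-(p+1)) * K)) * ennreal (1 / lam k) = ennreal (w k * c k * Hc * (lam k powr (-(p+1)) * K) * (1/lam k))"
            using lk by (intro ennreal_mult[symmetric] mult_nonneg_nonneg w0 c0 Hc K) auto
          also have "w k * c k * Hc * (lam k powr (-(p+1)) * K) * (1/lam k) = Hc * K * w k * (c k * (lam k powr (-(p+1)) * (1/lam k)))"
            by (simp only: mult_ac)
          finally show ?thesis unfolding pw .
        qed
        show ?thesis unfolding tk
          by (rule sum_ennreal) (intro mult_nonneg_nonneg w0 c0 Hc K, auto)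
      qed
      also have "\<dots> \<le> ennreal R"
      proof (intro ennreal_leI)
        have "(\<Sum>k<N. Hc * K * w k * (c k * lam k powr (-2*H))) \<le> (\<Sum>k<N. Hc * K * w k * (\<tau> powr (2*H+\<beta>-1) * lam k powr (\<beta>-1)))"
        proof (intro sum_mono mult_left_mono mult_nonneg_nonneg Hc K w0)
          fix k
          show "c k * lam k powr (-2*H) \<le> \<tau> powr (2*H+\<beta>-1) * lam k powr (\<beta>-1)"
            unfolding c_def using final_real[of "lam k" \<tau> H \<beta>] lam_pos tau H beta by simp
        qed
        also have "\<dots> = R" by (simp add: R_def sum_distrib_left mult_ac)
        finally show "(\<Sum>k<N. Hc * K * w k * (c k * lam k powr (-2*H))) \<le> R" .
      qed
      finally show ?thesis .
    qed
    finally have "(\<Sum>i<m. \<Sum>j<m. \<bar>T' i j\<bar>) \<le> R" using R0 by simp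
    then have main: "(\<Sum>i<m. \<Sum>j<m. T' i j) \<le> R"
      by (rule order.trans[rotated]) (intro sum_mono abs_ge_self)
    have normeq: "(norm (ANpow e lam N ((\<beta> - 1) / 2) (PN e N x)))\<^sup>2 = (\<Sum>k<N. lam k powr (\<beta>-1) * w k)"
    proof -
      have "(lam k powr ((\<beta> - 1) / 2))\<^sup>2 = lam k powr (\<beta>-1)" for k
        by (simp add: power2_eq_square powr_add[symmetric])
      then show ?thesis unfolding AN_norm[OF orth] w_def by simp
    qed
    show "(let \<tau> = T / real M; t = (\<lambda>i::nat. real i * \<tau>) in
       (\<Sum>i<m. \<Sum>j<m.
          (LBINT v=t j..t (Suc j). (LBINT u=t i..t (Suc i).
            inner (SN e lam N (t m) u (t i) (PN e N x)) (SN e lam N (t m) v (t j) (PN e N x))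
              * phi H (u - v))))
       \<le> Hc * K * \<tau> powr (2 * H + \<beta> - 1) * (norm (ANpow e lam N ((\<beta> - 1) / 2) (PN e N x)))\<^sup>2)"
      unfolding Let_def using main by (simp add: T'_def g_def t_def \<tau>_def y_def normeq R_def)
  qed
qed

end
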